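(* Let $A$ be an MV-algebra and $d$ an isotone $(\odot,\vee)$-derivation on $A$ with $d(1)\in\mathbf{B}(A)$. Then $d\circ d=d$.
   Context: An MV-algebra is an algebra $(A,\oplus,{}^*,0)$ of type $(2,1,0)$ satisfying: $x\oplus(y\oplus z)=(x\oplus y)\oplus z$, $x\oplus y=y\oplus x$, $x\oplus 0=x$, $x^{**}=x$, $x\oplus 0^*=0^*$, $(x^*\oplus y)^*\oplus y=(y^*\oplus x)^*\oplus x$. Put $1=0^*$ and $x\odot y=(x^*\oplus y^* )^*$. The natural order is $x\le y$ iff $x^*\oplus y=1$, with lattice operations $x\vee y=(x\odot y^* )\oplus y$, $x\wedge y=x\odot(x^*\oplus y)$. The Boolean center is $\mathbf{B}(A)=\{x\in A: x\oplus x=x\}$. A $(\odot,\vee)$-derivation on $A$ is a map $d:A\to A$ with $d(x\odot y)=(d(x)\odot y)\vee(x\odot d(y))$ for all $x,y\in A$; it is isotone if $x\le y$ implies $d(x)\le d(y)$. *)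

theory Defs
  imports Main
begin

definition mv_algebra :: "('a \<Rightarrow> 'a \<Rightarrow> 'a) \<Rightarrow> ('a \<Rightarrow> 'a) \<Rightarrow> 'a \<Rightarrow> bool" where
  "mv_algebra opl ng z \<longleftrightarrow>
     (\<forall>x y w. opl x (opl y w) = opl (opl x y) w) \<and>
     (\<forall>x y. opl x y = opl y x) \<and>
     (\<forall>x. opl x z = x) \<and>
     (\<forall>x. ng (ng x) = x) \<and>
     (\<forall>x. opl x (ng z) = ng z) \<and>
     (\<forall>x y. opl (ng (opl (ng x) y)) y = opl (ng (opl (ng y) x)) x)"

definition mv_one :: "('a \<Rightarrow> 'a) \<Rightarrow> 'a \<Rightarrow> 'a" where
  "mv_one ng z = ng z"

definition mv_odot :: "('a \<Rightarrow> 'a \<Rightarrow> 'a) \<Rightarrow> ('a \<Rightarrow> 'a) \<Rightarrow> 'a \<Rightarrow> 'a \<Rightarrow> 'a" where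
  "mv_odot opl ng x y = ng (opl (ng x) (ng y))"

definition mv_le :: "('a \<Rightarrow> 'a \<Rightarrow> 'a) \<Rightarrow> ('a \<Rightarrow> 'a) \<Rightarrow> 'a \<Rightarrow> 'a \<Rightarrow> 'a \<Rightarrow> bool" where
  "mv_le opl ng z x y \<longleftrightarrow> opl (ng x) y = mv_one ng z"

definition mv_join :: "('a \<Rightarrow> 'a \<Rightarrow> 'a) \<Rightarrow> ('a \<Rightarrow> 'a) \<Rightarrow> 'a \<Rightarrow> 'a \<Rightarrow> 'a" where
  "mv_join opl ng x y = opl (mv_odot opl ng x (ng y)) y"

definition mv_boolean_center :: "('a \<Rightarrow> 'a \<Rightarrow> 'a) \<Rightarrow> 'a set" where
  "mv_boolean_center opl = {x. opl x x = x}"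

definition odot_join_derivation ::
  "('a \<Rightarrow> 'a \<Rightarrow> 'a) \<Rightarrow> ('a \<Rightarrow> 'a) \<Rightarrow> ('a \<Rightarrow> 'a) \<Rightarrow> bool" where
  "odot_join_derivation opl ng d \<longleftrightarrow>
     (\<forall>x y. d (mv_odot opl ng x y) =
        mv_join opl ng (mv_odot opl ng (d x) y) (mv_odot opl ng x (d y)))"

definition mv_isotone :: "('a \<Rightarrow> 'a \<Rightarrow> 'a) \<Rightarrow> ('a \<Rightarrow> 'a) \<Rightarrow> 'a \<Rightarrow> ('a \<Rightarrow> 'a) \<Rightarrow> bool" where
  "mv_isotone opl ng z d \<longleftrightarrow> (\<forall>x y. mv_le opl ng z x y \<longrightarrow> mv_le opl ng z (d x) (d y))"

end

theory Submission
  imports Defs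
begin

locale mvl = fixes opl (infixl "\<oplus>" 65) and ng :: "'a \<Rightarrow> 'a" and z :: 'a
  assumes A1: "x \<oplus> (y \<oplus> w) = (x \<oplus> y) \<oplus> w"
  and A2: "x \<oplus> y = y \<oplus> x" and A3: "x \<oplus> z = x" and A4: "ng (ng x) = x"
  and A5: "x \<oplus> ng z = ng z" and A6: "ng (ng x \<oplus> y) \<oplus> y = ng (ng y \<oplus> x) \<oplus> x"
begin
lemma T: "ng x \<oplus> y = ng z \<Longrightarrow> ng y \<oplus> w = ng z \<Longrightarrow> ng x \<oplus> w = ng z"
  by (metis A1 A3 A4 A5 A6)
lemma K: "ng y \<oplus> b = ng z \<Longrightarrow> b \<oplus> b = b \<Longrightarrow> ng y \<oplus> ng (ng y \<oplus> ng b) = ng z"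
  by (metis A1 A2 A5 A6)
lemma L0: "z \<oplus> x = x" by (metis A2 A3)
lemma L2: "ng x \<oplus> x = ng z"
  using A6[of "ng z" x] by (metis A4 A5 A2 L0)
lemma L3: "ng x \<oplus> (x \<oplus> y) = ng z" by (metis A1 L2 A2 A5)
lemma L4: "u \<oplus> v = z \<Longrightarrow> v = z"
  by (metis L3 A2 A3 A4)
lemma antis: "ng x \<oplus> y = ng z \<Longrightarrow> ng y \<oplus> x = ng z \<Longrightarrow> x = y"
  using A6[of x y] by (metis A4 L0)
lemma joinsym: "ng (ng a \<oplus> ng (ng b)) \<oplus> b = ng (ng b \<oplus> ng (ng a)) \<oplus> a"
  by (metis A4 A6)
end

theorem corollary3p23:
  fixes opl :: "'a \<Rightarrow> 'a \<Rightarrow> 'a" and ng :: "'a \<Rightarrow> 'a" and z :: 'a and d :: "'a \<Rightarrow> 'a"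
  assumes "mv_algebra opl ng z"
    and "odot_join_derivation opl ng d"
    and "mv_isotone opl ng z d"
    and "d (mv_one ng z) \<in> mv_boolean_center opl"
  shows "d \<circ> d = d"
proof -
  interpret mvl opl ng z using assms(1) unfolding mv_algebra_def mvl_def by blast
  define b where "b = d (ng z)"
  have bb: "opl b b = b" using assms(4) by (simp add: b_def mv_one_def mv_boolean_center_def)
  have D: "\<And>x y. d (ng (opl (ng x) (ng y))) =
     opl (ng (opl (ng (ng (opl (ng (d x)) (ng y)))) (ng (ng (ng (opl (ng x) (ng (d y)))))))) (ng (opl (ng x) (ng (d y))))"
    using assms(2) by (simp add: odot_join_derivation_def mv_join_def mv_odot_def)
  have I: "\<And>x y. opl (ng x) y = ng z \<Longrightarrow> opl (ng (d x)) (d y) = ng z"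
    using assms(3) by (simp add: mv_isotone_def mv_le_def mv_one_def)
  have d0: "d z = z"
  proof -
    have "ng (opl (ng z) (ng z)) = z" by (metis A4 A5)
    then have "d z = d (ng (opl (ng z) (ng z)))" by simp
    also have "\<dots> = z" unfolding D by (metis A2 A3 A4 A5 L0)
    finally show ?thesis .
  qed
  have le_x: "\<And>x. opl (ng (d x)) x = ng z"
  proof -
    fix x
    have "ng (opl (ng x) (ng (ng x))) = z" by (metis A4 L2 A2)
    then have "z = d (ng (opl (ng x) (ng (ng x))))" using d0 by simp
    also have "\<dots> = opl (ng (opl (ng (ng (opl (ng (d x)) (ng (ng x))))) (ng (ng (ng (opl (ng x) (ng (d (ng x))))))))) (ng (opl (ng x) (ng (d (ng x)))))"
      by (rule D)
    also have "\<dots> = opl (ng (opl (ng (ng (opl (ng x) (ng (d (ng x)))))) (ng (ng (ng (opl (ng (d x)) (ng (ng x)))))))) (ng (opl (ng (d x)) (ng (ng x))))"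
      by (rule joinsym)
    finally have "ng (opl (ng (d x)) (ng (ng x))) = z" using L4 by metis
    then show "opl (ng (d x)) x = ng z" by (metis A4)
  qed
  have le_b: "\<And>x. opl (ng (d x)) b = ng z" unfolding b_def by (rule I) (rule A5)
  have ge: "\<And>x. opl (ng (ng (opl (ng x) (ng b)))) (d x) = ng z"
  proof -
    fix x
    have "ng (opl (ng x) (ng (ng z))) = x" by (metis A3 A4)
    then have "d x = d (ng (opl (ng x) (ng (ng z))))" by simp
    also have "\<dots> = opl (ng (opl (ng (ng (opl (ng (d x)) (ng (ng z))))) (ng (ng (ng (opl (ng x) (ng (d (ng z))))))))) (ng (opl (ng x) (ng (d (ng z)))))"
      by (rule D)
    finally have "d x = opl (ng (opl (ng (ng (opl (ng (d x)) (ng (ng z))))) (ng (ng (ng (opl (ng x) (ng b))))))) (ng (opl (ng x) (ng b)))"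
      by (simp add: b_def)
    then show "opl (ng (ng (opl (ng x) (ng b)))) (d x) = ng z"
      by (metis L3 A2)
  qed
  show ?thesis
  proof
    fix x
    have a: "opl (ng (d (d x))) (d x) = ng z" by (rule I) (rule le_x)
    have k: "opl (ng (d x)) (ng (opl (ng (d x)) (ng b))) = ng z" by (rule K[OF le_b bb])
    have c: "opl (ng (d x)) (d (d x)) = ng z" using T[OF k] ge[of "d x"] by (metis A4)
    show "(d \<circ> d) x = d x" using antis[OF a c] by simp
  qed
qed

end
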